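(* For every integer $k>1$ and $0<\gamma<\frac12$, $$k\,h(\gamma)-1\;\le\;F(k,\gamma)\;\le\;k\,h(\gamma)+\log\!\big(1+(1-2\gamma)^k\big)-1.$$ In particular $F(k,\gamma)=k\,h(\gamma)-1+O\big((1-2\gamma)^k\big)$ as $k\to\infty$.
   Context: Logarithms are base 2 and $h(t)=-t\log t-(1-t)\log(1-t)$. For real $k\ge 2$ and $\gamma\in(0,\frac12)$, $$F(k,\gamma)=\min_{x\in(0,1)}\Big[\log\big((1+x)^k+(1-x)^k\big)-k\gamma\log x-1\Big].$$ *)

theory Defs
  imports "HOL-Analysis.Analysis" "HOL-Library.Landau_Symbols"
begin

definition h :: "real \<Rightarrow> real" where
  "h t = - t * log 2 t - (1 - t) * log 2 (1 - t)"

text \<open>F(k,gamma) = min over x in (0,1) of log((1+x)^k+(1-x)^k) - k gamma log x - 1,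
  rendered as the infimum over the open interval (k real, real powers).\<close>
definition F :: "real \<Rightarrow> real \<Rightarrow> real" where
  "F k \<gamma> = (INF x\<in>{0<..<1::real}.
      log 2 ((1 + x) powr k + (1 - x) powr k) - k * \<gamma> * log 2 x - 1)"

end

theory Submission
  imports Defs
begin

lemma amgm_ln:
  fixes g x :: real
  assumes "0 < g" "g < 1" "0 < x"
  shows "ln (1 + x) \<ge> - (1-g) * ln (1-g) - g * ln g + g * ln x"
proof -
  have "(1 - g) * ln (1/(1-g)) + g * ln (x/g) \<le> ln ((1 - g) *\<^sub>R (1/(1-g)) + g *\<^sub>R (x/g))"
    by (rule concave_onD[OF ln_concave]) (use assms in auto)
  also have "(1 - g) *\<^sub>R (1/(1-g)) + g *\<^sub>R (x/g) = 1 + x" using assms by simp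
  finally show ?thesis using assms by (simp add: ln_div algebra_simps)
qed

lemma hL: "0 < g \<Longrightarrow> g < 1 \<Longrightarrow> h g * ln 2 = - g * ln g - (1-g) * ln (1-g)"
  by (simp add: h_def log_def field_simps)

lemma lower_pt:
  fixes g x :: real and k :: nat
  assumes "0 < g" "g < 1" "0 < x" "x < 1"
  shows "real k * h g - 1 \<le> log 2 ((1 + x) powr real k + (1 - x) powr real k) - real k * g * log 2 x - 1"
proof -
  have S: "(1 + x) powr real k + (1 - x) powr real k = (1+x)^k + (1-x)^k"
    using assms by (simp add: powr_realpow)
  have pos: "0 < (1+x)^k" using assms by simp
  have "ln ((1+x)^k) \<le> ln ((1+x)^k + (1-x)^k)"
    using assms pos by (subst ln_le_cancel_iff) (auto intro: add_pos_nonneg)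
  hence A: "real k * ln (1+x) \<le> ln ((1+x)^k + (1-x)^k)" using assms by (simp add: ln_realpow)
  have B: "real k * (h g * ln 2 + g * ln x) \<le> real k * ln (1+x)"
  proof (rule mult_left_mono)
    show "h g * ln 2 + g * ln x \<le> ln (1+x)"
      using amgm_ln[OF assms(1,2,3)] hL[OF assms(1,2)] by (simp add: algebra_simps)
  qed simp
  have "real k * h g * ln 2 \<le> ln ((1+x)^k + (1-x)^k) - real k * g * ln x"
    using A B by (simp add: algebra_simps)
  hence "real k * h g \<le> ln ((1+x)^k + (1-x)^k) / ln 2 - real k * g * (ln x / ln 2)"
    by (simp add: field_simps)
  thus ?thesis using S by (simp add: log_def)
qed

lemma upper_pt:
  fixes g :: real and k :: nat
  assumes "0 < g" "g < 1/2"
  shows "log 2 ((1 + g/(1-g)) powr real k + (1 - g/(1-g)) powr real k) - real k * g * log 2 (g/(1-g)) - 1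
     = real k * h g + log 2 (1 + (1 - 2*g) ^ k) - 1"
proof -
  have e1: "1 + g/(1-g) = 1/(1-g)" and e2: "1 - g/(1-g) = (1-2*g)/(1-g)" using assms by (auto simp: field_simps)
  have S: "(1 + g/(1-g)) powr real k + (1 - g/(1-g)) powr real k = (1 + (1-2*g)^k) / (1-g)^k"
    using assms by (simp add: e1 e2 powr_realpow power_divide add_divide_distrib)
  have p: "0 < 1 + (1-2*g)^k" using assms by (simp add: add_pos_nonneg)
  have "ln ((1 + (1-2*g)^k) / (1-g)^k) = ln (1 + (1-2*g)^k) - real k * ln (1-g)"
    using assms p by (simp add: ln_div ln_realpow)
  moreover have q: "ln (g/(1-g)) = ln g - ln (1-g)" using assms by (simp add: ln_div)
  moreover have "real k * (h g * ln 2) = real k * (- g * ln g - (1-g) * ln (1-g))" using hL[of g] assms by simp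
  ultimately have "ln ((1 + g/(1-g)) powr real k + (1 - g/(1-g)) powr real k) - real k * g * ln (g/(1-g))
      = real k * (h g * ln 2) + ln (1 + (1 - 2*g) ^ k)"
    unfolding S q by (simp add: algebra_simps)
  hence "ln ((1 + g/(1-g)) powr real k + (1 - g/(1-g)) powr real k) / ln 2 - real k * g * (ln (g/(1-g)) / ln 2)
      = real k * h g + ln (1 + (1 - 2*g) ^ k) / ln 2"
    by (simp add: field_simps)
  thus ?thesis by (simp add: log_def)
qed

lemma log_le: "0 \<le> y \<Longrightarrow> log 2 (1 + y) \<le> y / ln 2"
  using ln_add_one_self_le_self[of y] by (simp add: log_def divide_right_mono)

theorem mainTheorem12:
  fixes \<gamma> :: real
  assumes "0 < \<gamma>" and "\<gamma> < 1/2"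
  shows "(\<forall>k::nat. k > 1 \<longrightarrow>
            real k * h \<gamma> - 1 \<le> F (real k) \<gamma> \<and>
            F (real k) \<gamma> \<le> real k * h \<gamma> + log 2 (1 + (1 - 2*\<gamma>) ^ k) - 1)
       \<and> (\<lambda>k::nat. F (real k) \<gamma> - (real k * h \<gamma> - 1)) \<in> O(\<lambda>k. (1 - 2*\<gamma>) ^ k)"
proof -
  have bounds: "real k * h \<gamma> - 1 \<le> F (real k) \<gamma> \<and>
            F (real k) \<gamma> \<le> real k * h \<gamma> + log 2 (1 + (1 - 2*\<gamma>) ^ k) - 1" for k :: nat
  proof
    show "real k * h \<gamma> - 1 \<le> F (real k) \<gamma>"
      unfolding F_def by (rule cINF_greatest) (use lower_pt[of \<gamma> _ k] assms in auto)
    have mem: "\<gamma>/(1-\<gamma>) \<in> {0<..<1::real}" using assms by (auto simp: field_simps)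
    have "F (real k) \<gamma> \<le> log 2 ((1 + \<gamma>/(1-\<gamma>)) powr real k + (1 - \<gamma>/(1-\<gamma>)) powr real k) - real k * \<gamma> * log 2 (\<gamma>/(1-\<gamma>)) - 1"
      unfolding F_def
      by (rule cINF_lower[OF _ mem], rule bdd_belowI2[where m="real k * h \<gamma> - 1"])
         (use lower_pt[of \<gamma> _ k] assms in auto)
    thus "F (real k) \<gamma> \<le> real k * h \<gamma> + log 2 (1 + (1 - 2*\<gamma>) ^ k) - 1"
      using upper_pt[OF assms, of k] by simp
  qed
  have "(\<lambda>k::nat. F (real k) \<gamma> - (real k * h \<gamma> - 1)) \<in> O(\<lambda>k. (1 - 2*\<gamma>) ^ k)"
  proof (rule bigoI[where c="1 / ln 2"], rule always_eventually, rule allI)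
    fix k :: nat
    have t: "0 \<le> (1 - 2*\<gamma>)^k" using assms by simp
    have "norm (F (real k) \<gamma> - (real k * h \<gamma> - 1)) \<le> log 2 (1 + (1 - 2*\<gamma>) ^ k)"
      using bounds[of k] by simp
    also have "\<dots> \<le> (1 - 2*\<gamma>)^k / ln 2" by (rule log_le[OF t])
    also have "\<dots> = 1 / ln 2 * norm ((1 - 2*\<gamma>)^k)" using t by simp
    finally show "norm (F (real k) \<gamma> - (real k * h \<gamma> - 1)) \<le> 1 / ln 2 * norm ((1 - 2*\<gamma>)^k)" .
  qed
  thus ?thesis using bounds by blast
qed

end
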